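(* Let $S,T,W$ be as in the trilevel setting with contraction constant $r\in[0,1)$ of $S$, and set $\alpha_k=\min\{\frac{2}{(1-r)k},1\}$ for $k\ge1$ and $J=\lfloor\frac{2}{1-r}\rfloor$. Given $x^0\in\mathbb R^n$, define for $k\ge1$: $v^k=S(x^{k-1})$, $y^k=T(x^{k-1})$, $z^k=W(x^{k-1})$, and $x^k=\alpha_kv^k+(1-\alpha_k)\alpha_ky^k+(1-\alpha_k)^2z^k$. Let $x\in\mathrm{Fix}(W)$ and let $C_x,C_S,C_T\ge0$ be constants such that for all $k\ge0$: $\|x^k-x\|\le C_x$, $\|S(x^k)-x\|\le C_S+C_x$, $\|T(x^k)-x\|\le C_T+C_x$ (such constants exist). Then for every $k\ge1$, \[\|x^k-x^{k-1}\|\le\frac{(C_S+2C_T+5C_x)J}{(1-r)k},\qquad \|z^k-x^{k-1}\|\le\frac{(C_S+2C_T+5C_x)(J+2)}{(1-r)k}.\]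
   Context: Trilevel setting. Let $f_1,f_2:\mathbb R^n\to\mathbb R$ be convex and continuously differentiable with $L_{f_i}$-Lipschitz gradients, $g_1,g_2:\mathbb R^n\to(-\infty,+\infty]$ proper, lower semicontinuous and convex, $\phi_i=f_i+g_i$; $\omega:\mathbb R^n\to\mathbb R$ is $\mu$-strongly convex, continuously differentiable with $L_\omega$-Lipschitz gradient. $\mathrm{prox}_g(x)=\arg\min_u\{g(u)+\tfrac12\|u-x\|^2\}$. For $u\in(0,\tfrac{2}{L_\omega+\mu}]$, $t\in(0,1/L_{f_1}]$, $s\in(0,1/L_{f_2}]$: $S(x)=x-u\nabla\omega(x)$, $T(x)=\mathrm{prox}_{tg_1}(x-t\nabla f_1(x))$, $W(x)=\mathrm{prox}_{sg_2}(x-s\nabla f_2(x))$. $S$ is a contraction with constant $r=\sqrt{1-\tfrac{2u\mu L_\omega}{\mu+L_\omega}}$, assumed here to lie in $[0,1)$; $T,W$ are nonexpansive, and $\mathrm{Fix}(W)=\arg\min\phi_2\neq\emptyset$. *)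

theory Defs
  imports "HOL-Analysis.Analysis" "HOL-Library.Extended_Real"
begin

definition proper_fun :: "('a \<Rightarrow> ereal) \<Rightarrow> bool" where
  "proper_fun g \<longleftrightarrow> (\<forall>x. g x \<noteq> -\<infinity>) \<and> (\<exists>x. g x \<noteq> \<infinity>)"

definition lsc_fun :: "('a::topological_space \<Rightarrow> ereal) \<Rightarrow> bool" where
  "lsc_fun g \<longleftrightarrow> (\<forall>c::real. closed {x. g x \<le> ereal c})"

definition convex_efun :: "('a::real_vector \<Rightarrow> ereal) \<Rightarrow> bool" where
  "convex_efun g \<longleftrightarrow> (\<forall>x y a. 0 < a \<and> a < 1 \<longrightarrow>
      g (a *\<^sub>R x + (1 - a) *\<^sub>R y) \<le> ereal a * g x + ereal (1 - a) * g y)"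

definition strongly_convex_on :: "real \<Rightarrow> ('a::real_inner \<Rightarrow> real) \<Rightarrow> bool" where
  "strongly_convex_on \<mu> w \<longleftrightarrow> (\<forall>x y a. 0 \<le> a \<and> a \<le> 1 \<longrightarrow>
      w (a *\<^sub>R x + (1 - a) *\<^sub>R y) \<le> a * w x + (1 - a) * w y
        - \<mu> / 2 * a * (1 - a) * (norm (x - y))\<^sup>2)"

text \<open>Proximal map: prox g x = argmin_u { g u + 1/2 ||u - x||^2 }.
  (The minimizer exists and is unique for proper lsc convex g.)\<close>
definition prox :: "('a::real_normed_vector \<Rightarrow> ereal) \<Rightarrow> 'a \<Rightarrow> 'a" where
  "prox g x = (SOME u. \<forall>v. g u + ereal ((norm (u - x))\<^sup>2 / 2) \<le> g v + ereal ((norm (v - x))\<^sup>2 / 2))"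

definition escale :: "real \<Rightarrow> ('a \<Rightarrow> ereal) \<Rightarrow> 'a \<Rightarrow> ereal" where
  "escale t g = (\<lambda>x. ereal t * g x)"

end

theory Submission
  imports Defs
begin


lemma lsc_add_cont:
  fixes G :: "'a::topological_space \<Rightarrow> ereal"
  assumes G: "lsc_fun G" and q: "continuous_on UNIV q"
  shows "lsc_fun (\<lambda>u. G u + ereal (q u))"
  unfolding lsc_fun_def
proof
  fix c :: real
  have "open {u. ereal c < G u + ereal (q u)}"
  proof (subst open_subopen, intro ballI)
    fix u assume "u \<in> {u. ereal c < G u + ereal (q u)}"
    hence "ereal (c - q u) < G u"
      by (cases "G u") auto
    then obtain a where a1: "ereal (c - q u) < ereal a" and a2: "ereal a < G u"
      using ereal_dense2 by blast
    define T where "T = {v. ereal a < G v} \<inter> {v. c - a < q v}"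
    have "open {v. ereal a < G v}"
    proof -
      have "{v. ereal a < G v} = - {v. G v \<le> ereal a}" by auto
      thus ?thesis using G unfolding lsc_fun_def by auto
    qed
    moreover have "open {v. c - a < q v}"
      using q by (intro open_Collect_less) (auto intro: continuous_intros)
    ultimately have "open T" unfolding T_def by auto
    moreover have "u \<in> T" using a1 a2 unfolding T_def by auto
    moreover have "T \<subseteq> {u. ereal c < G u + ereal (q u)}"
    proof
      fix v assume "v \<in> T"
      hence "ereal a < G v" "c - a < q v" unfolding T_def by auto
      thus "v \<in> {u. ereal c < G u + ereal (q u)}"
        by (cases "G v") auto
    qed
    ultimately show "\<exists>T. open T \<and> u \<in> T \<and> T \<subseteq> {u. ereal c < G u + ereal (q u)}" by blast
  qed
  moreover have "{u. G u + ereal (q u) \<le> ereal c} = - {u. ereal c < G u + ereal (q u)}" by auto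
  ultimately show "closed {u. G u + ereal (q u) \<le> ereal c}" by (simp add: closed_def)
qed

lemma lsc_min_compact:
  fixes f :: "'a::topological_space \<Rightarrow> ereal"
  assumes f: "lsc_fun f" and K: "compact K" "K \<noteq> {}"
  shows "\<exists>m\<in>K. \<forall>y\<in>K. f m \<le> f y"
proof -
  define c where "c = (INF y\<in>K. f y)"
  have "K \<inter> (\<Inter>d\<in>{d::real. c < ereal d}. {u. f u \<le> ereal d}) \<noteq> {}"
  proof (rule compact_imp_fip_image[OF K(1)])
    fix d show "closed {u. f u \<le> ereal d}" using f unfolding lsc_fun_def by auto
  next
    fix I' assume I': "finite I'" "I' \<subseteq> {d::real. c < ereal d}"
    show "K \<inter> (\<Inter>d\<in>I'. {u. f u \<le> ereal d}) \<noteq> {}"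
    proof (cases "I' = {}")
      case True thus ?thesis using K by auto
    next
      case False
      define d0 where "d0 = Min I'"
      have "d0 \<in> I'" unfolding d0_def using I' False by auto
      hence "c < ereal d0" using I' by auto
      then obtain y where y: "y \<in> K" "f y < ereal d0" unfolding c_def INF_less_iff by blast
      have "\<forall>d\<in>I'. f y \<le> ereal d"
      proof
        fix d assume "d \<in> I'"
        hence "d0 \<le> d" unfolding d0_def using I' by auto
        hence "ereal d0 \<le> ereal d" by simp
        thus "f y \<le> ereal d" using y(2) by (meson less_imp_le order_trans)
      qed
      thus ?thesis using y by blast
    qed
  qed
  then obtain m where m: "m \<in> K" "\<And>d. c < ereal d \<Longrightarrow> f m \<le> ereal d" by blast
  have "f m \<le> c"
  proof (rule dense_ge)
    fix w assume "c < w"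
    then obtain d where "c < ereal d" "ereal d < w" using ereal_dense2 by blast
    thus "f m \<le> w" using m(2) by (meson less_imp_le order_trans)
  qed
  moreover have "\<forall>y\<in>K. c \<le> f y" unfolding c_def by (auto intro: INF_lower)
  ultimately show ?thesis using m(1) by (meson order_trans)
qed


lemma real_coercive_aux:
  fixes D e R \<rho> :: real
  assumes "D \<ge> 0" "e \<ge> 0" "R = 2*D + 2 + D*(1+e) + e^2/2" "\<rho> > R"
  shows "- D*(1+\<rho>+e) + \<rho>^2/2 > e^2/2"
proof -
  have h1: "D*(1+e) \<ge> 0" "e^2/2 \<ge> 0" using assms by auto
  have "\<rho>/2 - D > 1" using assms h1 by linarith
  moreover have "\<rho> > 0" using assms h1 by linarith
  ultimately have "\<rho> * (\<rho>/2 - D) > \<rho> * 1" by (intro mult_strict_left_mono) auto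
  moreover have "\<rho> > D*(1+e) + e^2/2" using assms by auto
  moreover have "\<rho> * (\<rho>/2 - D) = \<rho>^2/2 - D*\<rho>" by (simp add: algebra_simps power2_eq_square)
  moreover have "D*(1+\<rho>+e) = D + D*\<rho> + D*e" by (simp add: algebra_simps)
  moreover have "D*(1+e) = D + D*e" by (simp add: algebra_simps)
  ultimately show ?thesis by linarith
qed

lemma convex_lower_linear:
  fixes G :: "'a::euclidean_space \<Rightarrow> ereal"
  assumes cvx: "convex_efun G" and u0: "G u0 = ereal g0"
    and m: "\<And>y. y \<in> cball u0 1 \<Longrightarrow> ereal m \<le> G y" and mg: "m \<le> g0"
  shows "ereal (g0 - \<bar>m - g0\<bar> * (1 + norm (u - u0))) \<le> G u"
proof (cases "norm (u - u0) \<le> 1")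
  case True
  hence "ereal m \<le> G u" using m by (simp add: dist_norm norm_minus_commute)
  moreover have "g0 - \<bar>m - g0\<bar> * (1 + norm (u - u0)) \<le> m"
  proof -
    have "\<bar>m - g0\<bar> = g0 - m" using mg by simp
    moreover have "(g0 - m) * norm (u - u0) \<ge> 0" using mg by simp
    ultimately show ?thesis by (simp add: algebra_simps)
  qed
  ultimately show ?thesis by (meson ereal_less_eq(3) order_trans)
next
  case False
  define \<rho> where "\<rho> = norm (u - u0)"
  define a where "a = 1 / \<rho>"
  have \<rho>1: "\<rho> > 1" using False \<rho>_def by auto
  have a: "0 < a" "a < 1" using \<rho>1 a_def by auto
  define w where "w = a *\<^sub>R u + (1 - a) *\<^sub>R u0"
  have "w - u0 = a *\<^sub>R (u - u0)" unfolding w_def by (simp add: algebra_simps)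
  moreover have "u \<noteq> u0" using \<rho>1 \<rho>_def by auto
  ultimately have "norm (w - u0) = 1" using \<rho>1 a_def \<rho>_def by simp
  hence "ereal m \<le> G w" using m by (simp add: dist_norm norm_minus_commute)
  also have "G w \<le> ereal a * G u + ereal (1 - a) * G u0"
    using cvx a unfolding convex_efun_def w_def by blast
  finally have le: "ereal m \<le> ereal a * G u + ereal (1 - a) * ereal g0" using u0 by simp
  show ?thesis
  proof (cases "G u")
    case (real gu)
    with le have "m \<le> a * gu + (1 - a) * g0" by simp
    hence "m - g0 \<le> a * (gu - g0)" by (simp add: algebra_simps)
    hence "\<rho> * (m - g0) \<le> \<rho> * (a * (gu - g0))" using \<rho>1 by (simp add: mult_left_mono)
    hence "\<rho> * (m - g0) \<le> gu - g0" using \<rho>1 a_def by simp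
    moreover have "g0 - (g0 - m) * (1 + \<rho>) = m + \<rho> * (m - g0)" by (simp add: algebra_simps)
    ultimately have "g0 - (g0 - m) * (1 + \<rho>) \<le> gu" using mg by linarith
    moreover have "\<bar>m - g0\<bar> = g0 - m" using mg by simp
    ultimately have "g0 - \<bar>m - g0\<bar> * (1 + \<rho>) \<le> gu" by simp
    thus ?thesis using real \<rho>_def by simp
  next
    case PInf thus ?thesis by simp
  next
    case MInf
    have "ereal a * G u = -\<infinity>" unfolding MInf using a by simp
    hence sm: "ereal a * G u + ereal (1 - a) * ereal g0 = -\<infinity>" by (simp only: times_ereal.simps plus_ereal.simps)
    have "ereal m \<le> -\<infinity>" using le unfolding sm .
    hence False by simp
    thus ?thesis by simp
  qed
qed

lemma prox_exists:
  fixes G :: "'a::euclidean_space \<Rightarrow> ereal"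
  assumes prp: "proper_fun G" and lsc: "lsc_fun G" and cvx: "convex_efun G"
  shows "\<exists>u. \<forall>v. G u + ereal ((norm (u - x))\<^sup>2 / 2) \<le> G v + ereal ((norm (v - x))\<^sup>2 / 2)"
proof -
  obtain u0 where "G u0 \<noteq> \<infinity>" using prp unfolding proper_fun_def by auto
  moreover have "G u0 \<noteq> -\<infinity>" using prp unfolding proper_fun_def by auto
  ultimately obtain g0 where g0: "G u0 = ereal g0" by (cases "G u0") auto
  obtain w0 where w0: "w0 \<in> cball u0 1" "\<And>y. y \<in> cball u0 1 \<Longrightarrow> G w0 \<le> G y"
    using lsc_min_compact[OF lsc compact_cball, of u0 1] by auto
  have "G w0 \<le> ereal g0" using w0(2)[of u0] g0 by simp
  moreover have "G w0 \<noteq> -\<infinity>" using prp unfolding proper_fun_def by auto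
  ultimately obtain m where m: "G w0 = ereal m" "m \<le> g0" by (cases "G w0") auto
  define D where "D = \<bar>m - g0\<bar>"
  have lowb: "\<And>u. ereal (g0 - D * (1 + norm (u - u0))) \<le> G u"
    unfolding D_def using convex_lower_linear[OF cvx g0, of m] w0 m by auto
  define h where "h = (\<lambda>u. G u + ereal ((norm (u - x))\<^sup>2 / 2))"
  have hlsc: "lsc_fun h" unfolding h_def
    by (rule lsc_add_cont[OF lsc]) (intro continuous_intros, auto)
  define e where "e = norm (x - u0)"
  define R where "R = 2*D + 2 + D*(1+e) + e^2/2"
  have "D \<ge> 0" "e \<ge> 0" unfolding D_def e_def by auto
  moreover have "D*(1+e) \<ge> 0" "e^2/2 \<ge> 0" using \<open>D \<ge> 0\<close> \<open>e \<ge> 0\<close> by auto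
  moreover have "e \<le> e^2/2 + 1"
  proof -
    have "0 \<le> (e-1)^2" by simp
    moreover have "(e-1)^2 = e^2 - 2*e + 1" by (simp add: power2_eq_square algebra_simps)
    ultimately show ?thesis by linarith
  qed
  ultimately have "R \<ge> e" unfolding R_def by linarith
  hence u0K: "u0 \<in> cball x R" unfolding e_def by (simp add: dist_norm)
  obtain p where p: "p \<in> cball x R" "\<And>y. y \<in> cball x R \<Longrightarrow> h p \<le> h y"
  proof -
    have "cball x R \<noteq> {}" using u0K by blast
    from lsc_min_compact[OF hlsc compact_cball this] show ?thesis using that by blast
  qed
  have "\<forall>v. h p \<le> h v"
  proof
    fix v
    show "h p \<le> h v"
    proof (cases "v \<in> cball x R")
      case True thus ?thesis using p by auto
    next
      case False
      define \<rho> where "\<rho> = norm (v - x)"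
      have \<rho>R: "\<rho> > R" using False \<rho>_def by (simp add: dist_norm norm_minus_commute)
      have tri: "norm (v - u0) \<le> \<rho> + e" unfolding \<rho>_def e_def
        using norm_triangle_ineq[of "v - x" "x - u0"] by simp
      have "g0 - D * (1 + \<rho> + e) \<le> g0 - D * (1 + norm (v - u0))"
        using tri \<open>D \<ge> 0\<close> by (simp add: mult_left_mono)
      hence "ereal (g0 - D * (1 + \<rho> + e)) \<le> G v" using lowb[of v] by (meson ereal_less_eq(3) order_trans)
      hence "ereal (g0 - D * (1 + \<rho> + e) + \<rho>^2/2) \<le> h v"
        unfolding h_def \<rho>_def by (cases "G v") auto
      moreover have "g0 + e^2/2 < g0 - D * (1 + \<rho> + e) + \<rho>^2/2"
        using real_coercive_aux[OF \<open>D \<ge> 0\<close> \<open>e \<ge> 0\<close> R_def \<rho>R] by (simp add: algebra_simps)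
      moreover have "h u0 = ereal (g0 + e^2/2)" unfolding h_def e_def g0
        by (simp add: norm_minus_commute)
      ultimately have "h u0 \<le> h v"
        by (metis ereal_less_eq(3) less_imp_le order_trans)
      thus ?thesis using p(2)[OF u0K] by (meson order_trans)
    qed
  qed
  thus ?thesis unfolding h_def by blast
qed


lemma norm_add_scale_sq:
  fixes b d :: "'a::real_inner"
  shows "(norm (b + a *\<^sub>R d))\<^sup>2 = (norm b)\<^sup>2 + 2 * a * inner b d + a * a * (norm d)\<^sup>2"
  by (simp add: power2_norm_eq_inner inner_add_left inner_add_right inner_commute algebra_simps)

lemma prox_min:
  fixes G :: "'a::euclidean_space \<Rightarrow> ereal"
  assumes "proper_fun G" "lsc_fun G" "convex_efun G"
  shows "G (prox G x) + ereal ((norm (prox G x - x))\<^sup>2 / 2) \<le> G v + ereal ((norm (v - x))\<^sup>2 / 2)"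
proof -
  from prox_exists[OF assms, of x]
  have "\<forall>v. G (prox G x) + ereal ((norm (prox G x - x))\<^sup>2 / 2) \<le> G v + ereal ((norm (v - x))\<^sup>2 / 2)"
    unfolding prox_def by (rule someI_ex)
  thus ?thesis by blast
qed

lemma prox_finite:
  fixes G :: "'a::euclidean_space \<Rightarrow> ereal"
  assumes prp: "proper_fun G" "lsc_fun G" "convex_efun G"
  shows "\<exists>gp. G (prox G x) = ereal gp"
proof -
  obtain u0 where u0: "G u0 \<noteq> \<infinity>" using prp(1) unfolding proper_fun_def by auto
  have "G (prox G x) + ereal ((norm (prox G x - x))\<^sup>2 / 2) \<le> G u0 + ereal ((norm (u0 - x))\<^sup>2 / 2)"
    by (rule prox_min[OF prp])
  moreover have "G u0 + ereal ((norm (u0 - x))\<^sup>2 / 2) \<noteq> \<infinity>" using u0 by simp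
  ultimately have "G (prox G x) \<noteq> \<infinity>" by auto
  moreover have "G (prox G x) \<noteq> -\<infinity>" using prp(1) unfolding proper_fun_def by auto
  ultimately show ?thesis by (cases "G (prox G x)") auto
qed

lemma prox_var:
  fixes G :: "'a::euclidean_space \<Rightarrow> ereal"
  assumes prp: "proper_fun G" "lsc_fun G" "convex_efun G"
    and gp: "G (prox G x) = ereal gp" and gv: "G v = ereal gv"
  shows "gp + inner (x - prox G x) (v - prox G x) \<le> gv"
proof -
  define p where "p = prox G x"
  define N where "N = (norm (v - p))\<^sup>2"
  define Q where "Q = gp - gv + inner (x - p) (v - p)"
  have key: "a * Q \<le> a * (a * N / 2)" if a: "0 < a" "a < 1" for a
  proof -
    define z where "z = a *\<^sub>R v + (1 - a) *\<^sub>R p"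
    have "G z \<le> ereal a * G v + ereal (1 - a) * G p"
      using prp(3) a unfolding convex_efun_def z_def by blast
    also have "\<dots> = ereal (a * gv + (1 - a) * gp)" using gv gp p_def by simp
    finally have Gz: "G z \<le> ereal (a * gv + (1 - a) * gp)" .
    have "G p + ereal ((norm (p - x))\<^sup>2 / 2) \<le> G z + ereal ((norm (z - x))\<^sup>2 / 2)"
      unfolding p_def by (rule prox_min[OF prp])
    also have "\<dots> \<le> ereal (a * gv + (1 - a) * gp) + ereal ((norm (z - x))\<^sup>2 / 2)"
      using Gz by (rule add_right_mono)
    finally have "gp + (norm (p - x))\<^sup>2 / 2 \<le> a * gv + (1 - a) * gp + (norm (z - x))\<^sup>2 / 2"
      using gp p_def by simp
    moreover have "z - x = (p - x) + a *\<^sub>R (v - p)" unfolding z_def by (simp add: algebra_simps)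
    hence "(norm (z - x))\<^sup>2 = (norm (p - x))\<^sup>2 + 2 * a * inner (p - x) (v - p) + a * a * N"
      unfolding N_def by (simp only: norm_add_scale_sq)
    moreover have "a * inner (p - x) (v - p) = - (a * inner (x - p) (v - p))"
      by (simp add: inner_diff_left algebra_simps)
    moreover have "(1 - a) * gp = gp - a * gp" by (simp add: algebra_simps)
    moreover have "2 * a * inner (p - x) (v - p) = 2 * (a * inner (p - x) (v - p))" by simp
    moreover have "a * (gp - gv + inner (x - p) (v - p)) = a * gp - a * gv + a * inner (x - p) (v - p)"
      by (simp add: algebra_simps)
    ultimately have "a * (gp - gv + inner (x - p) (v - p)) \<le> a * a * N / 2"
      by linarith
    thus ?thesis unfolding Q_def by (simp add: algebra_simps)
  qed
  have "Q \<le> 0"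
  proof (rule ccontr)
    assume "\<not> Q \<le> 0" hence Q: "Q > 0" by simp
    have N0: "N \<ge> 0" unfolding N_def by simp
    define a where "a = min (1/2) (Q / (N + 1))"
    have a: "0 < a" "a < 1" unfolding a_def using Q N0 by auto
    have "a \<le> Q / (N + 1)" unfolding a_def by simp
    hence "a * (N + 1) \<le> Q" using N0 by (simp add: field_simps)
    hence "a * N \<le> Q" using a by (simp add: algebra_simps)
    hence "a * N / 2 < Q" using Q by simp
    hence "a * (a * N / 2) < a * Q" using a by simp
    with key[OF a] show False by simp
  qed
  thus ?thesis unfolding Q_def p_def by simp
qed

lemma prox_nonexp:
  fixes G :: "'a::euclidean_space \<Rightarrow> ereal"
  assumes prp: "proper_fun G" "lsc_fun G" "convex_efun G"
  shows "norm (prox G x - prox G y) \<le> norm (x - y)"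
proof -
  define p where "p = prox G x"
  define q where "q = prox G y"
  obtain gp where gp: "G p = ereal gp" using prox_finite[OF prp] p_def by blast
  obtain gq where gq: "G q = ereal gq" using prox_finite[OF prp] q_def by blast
  have 1: "gp + inner (x - p) (q - p) \<le> gq" using prox_var[OF prp, of x gp q gq] gp gq p_def by simp
  have 2: "gq + inner (y - q) (p - q) \<le> gp" using prox_var[OF prp, of y gq p gp] gp gq q_def by simp
  have "inner (x - p) (q - p) + inner (y - q) (p - q) = (norm (p - q))\<^sup>2 - inner (x - y) (p - q)"
    by (simp add: power2_norm_eq_inner inner_diff_left inner_diff_right inner_commute algebra_simps)
  with 1 2 have "(norm (p - q))\<^sup>2 \<le> inner (x - y) (p - q)" by linarith
  also have "\<dots> \<le> norm (x - y) * norm (p - q)" by (rule norm_cauchy_schwarz)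
  finally have *: "norm (p - q) * norm (p - q) \<le> norm (x - y) * norm (p - q)"
    by (simp add: power2_eq_square)
  show ?thesis
  proof (cases "norm (p - q) = 0")
    case True thus ?thesis unfolding p_def q_def by simp
  next
    case False
    hence "norm (p - q) > 0" by simp
    with * show ?thesis unfolding p_def q_def by (simp add: mult_le_cancel_right)
  qed
qed

lemma escale_props:
  fixes g :: "'a::euclidean_space \<Rightarrow> ereal"
  assumes t: "t > 0" and prp: "proper_fun g" "lsc_fun g" "convex_efun g"
  shows "proper_fun (escale t g)" "lsc_fun (escale t g)" "convex_efun (escale t g)"
proof -
  show "proper_fun (escale t g)"
  proof -
    have "\<forall>x. ereal t * g x \<noteq> -\<infinity>"
    proof
      fix x have "g x \<noteq> -\<infinity>" using prp(1) unfolding proper_fun_def by auto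
      thus "ereal t * g x \<noteq> -\<infinity>" using t by (cases "g x") auto
    qed
    moreover obtain x where "g x \<noteq> \<infinity>" using prp(1) unfolding proper_fun_def by auto
    hence "ereal t * g x \<noteq> \<infinity>" using t by (cases "g x") auto
    ultimately show ?thesis unfolding proper_fun_def escale_def by auto
  qed
  show "lsc_fun (escale t g)" unfolding lsc_fun_def
  proof
    fix c :: real
    have "{x. escale t g x \<le> ereal c} = {x. g x \<le> ereal (c / t)}"
    proof (rule Collect_cong)
      fix x show "(escale t g x \<le> ereal c) = (g x \<le> ereal (c / t))"
        unfolding escale_def using t by (cases "g x") (auto simp: field_simps)
    qed
    thus "closed {x. escale t g x \<le> ereal c}" using prp(2) unfolding lsc_fun_def by simp
  qed
  show "convex_efun (escale t g)" unfolding convex_efun_def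
  proof (intro allI impI)
    fix x y :: 'a and a :: real assume a: "0 < a \<and> a < 1"
    have "g (a *\<^sub>R x + (1 - a) *\<^sub>R y) \<le> ereal a * g x + ereal (1 - a) * g y"
      using prp(3) a unfolding convex_efun_def by blast
    hence "ereal t * g (a *\<^sub>R x + (1 - a) *\<^sub>R y) \<le> ereal t * (ereal a * g x + ereal (1 - a) * g y)"
      using t by (intro ereal_mult_left_mono) auto
    also have "\<dots> = ereal a * (ereal t * g x) + ereal (1 - a) * (ereal t * g y)"
    proof -
      have "g x \<noteq> -\<infinity>" "g y \<noteq> -\<infinity>" using prp(1) unfolding proper_fun_def by auto
      thus ?thesis using t a by (cases "g x"; cases "g y") (auto simp: algebra_simps)
    qed
    finally show "escale t g (a *\<^sub>R x + (1 - a) *\<^sub>R y) \<le> ereal a * escale t g x + ereal (1 - a) * escale t g y"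
      unfolding escale_def .
  qed
qed


lemma line_deriv:
  fixes f :: "'a::real_inner \<Rightarrow> real"
  assumes df: "\<And>y. (f has_derivative (\<lambda>h. inner (grad y) h)) (at y)"
  shows "((\<lambda>\<tau>. f (x + \<tau> *\<^sub>R d)) has_field_derivative (inner (grad (x + \<tau> *\<^sub>R d)) d)) (at \<tau> within S)"
proof -
  have l: "((\<lambda>\<tau>. x + \<tau> *\<^sub>R d) has_derivative (\<lambda>s. s *\<^sub>R d)) (at \<tau> within S)"
    by (auto intro!: derivative_eq_intros)
  have "((\<lambda>\<tau>. f (x + \<tau> *\<^sub>R d)) has_derivative (\<lambda>s. inner (grad (x + \<tau> *\<^sub>R d)) (s *\<^sub>R d))) (at \<tau> within S)"
    by (rule has_derivative_compose[OF l df])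
  thus ?thesis by (rule has_derivative_imp_has_field_derivative) simp
qed

lemma grad_ineq:
  fixes f :: "'a::real_inner \<Rightarrow> real"
  assumes cvx: "convex_on UNIV f" and df: "\<And>y. (f has_derivative (\<lambda>h. inner (grad y) h)) (at y)"
  shows "f x + inner (grad x) (y - x) \<le> f y"
proof -
  define q where "q = (\<lambda>\<tau>::real. f (x + \<tau> *\<^sub>R (y - x)))"
  have "convex_on UNIV q"
  proof (rule convex_onI)
    fix t a b :: real assume t: "0 < t" "t < 1"
    have "x + ((1 - t) * a + t * b) *\<^sub>R (y - x) = (1 - t) *\<^sub>R (x + a *\<^sub>R (y - x)) + t *\<^sub>R (x + b *\<^sub>R (y - x))"
      by (simp add: algebra_simps)
    thus "q ((1 - t) *\<^sub>R a + t *\<^sub>R b) \<le> (1 - t) * q a + t * q b"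
      unfolding q_def using convex_onD[OF cvx, of t] t by simp
  qed simp
  moreover have "(q has_field_derivative (inner (grad x) (y - x))) (at 0 within UNIV)"
    unfolding q_def using line_deriv[OF df, of x "y - x" 0 UNIV] by simp
  ultimately have "q 1 - q 0 \<ge> inner (grad x) (y - x) * (1 - 0)"
    by (intro convex_on_imp_above_tangent) auto
  thus ?thesis unfolding q_def by simp
qed

lemma descent:
  fixes f :: "'a::real_inner \<Rightarrow> real"
  assumes df: "\<And>y. (f has_derivative (\<lambda>h. inner (grad y) h)) (at y)"
    and lip: "\<And>y z. norm (grad y - grad z) \<le> L * norm (y - z)"
  shows "f y \<le> f x + inner (grad x) (y - x) + L / 2 * (norm (y - x))\<^sup>2"
proof -
  define d where "d = y - x"
  define p where "p = (\<lambda>\<tau>::real. f (x + \<tau> *\<^sub>R d) - \<tau> * inner (grad x) d - L * \<tau>\<^sup>2 * (norm d)\<^sup>2 / 2)"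
  have "p 0 \<ge> p 1"
  proof (rule DERIV_nonpos_imp_nonincreasing[of 0 1 p])
    fix \<tau> :: real assume \<tau>: "0 \<le> \<tau>" "\<tau> \<le> 1"
    have "(p has_field_derivative (inner (grad (x + \<tau> *\<^sub>R d)) d - inner (grad x) d - L * \<tau> * (norm d)\<^sup>2)) (at \<tau>)"
    proof -
      have d1: "((\<lambda>\<tau>. f (x + \<tau> *\<^sub>R d)) has_field_derivative inner (grad (x + \<tau> *\<^sub>R d)) d) (at \<tau>)"
        by (rule line_deriv[OF df])
      have d2: "((\<lambda>\<tau>. \<tau> * inner (grad x) d) has_field_derivative inner (grad x) d) (at \<tau>)"
        by (auto intro!: derivative_eq_intros)
      have d3: "((\<lambda>\<tau>. L * \<tau>\<^sup>2 * (norm d)\<^sup>2 / 2) has_field_derivative L * \<tau> * (norm d)\<^sup>2) (at \<tau>)"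
        by (auto intro!: derivative_eq_intros)
      show ?thesis unfolding p_def by (rule DERIV_diff[OF DERIV_diff[OF d1 d2] d3])
    qed
    moreover have "inner (grad (x + \<tau> *\<^sub>R d)) d - inner (grad x) d - L * \<tau> * (norm d)\<^sup>2 \<le> 0"
    proof -
      have "inner (grad (x + \<tau> *\<^sub>R d)) d - inner (grad x) d = inner (grad (x + \<tau> *\<^sub>R d) - grad x) d"
        by (simp add: inner_diff_left)
      also have "\<dots> \<le> norm (grad (x + \<tau> *\<^sub>R d) - grad x) * norm d" by (rule norm_cauchy_schwarz)
      also have "\<dots> \<le> (L * norm (\<tau> *\<^sub>R d)) * norm d"
        using lip[of "x + \<tau> *\<^sub>R d" x] by (simp add: mult_right_mono)
      also have "\<dots> = L * \<tau> * (norm d)\<^sup>2" using \<tau> by (simp add: power2_eq_square)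
      finally show ?thesis by simp
    qed
    ultimately show "\<exists>y. (p has_real_derivative y) (at \<tau>) \<and> y \<le> 0" by blast
  qed simp
  thus ?thesis unfolding p_def d_def by (simp add: algebra_simps)
qed


lemma cocoer_half:
  fixes f :: "'a::real_inner \<Rightarrow> real"
  assumes cvx: "convex_on UNIV f" and df: "\<And>y. (f has_derivative (\<lambda>h. inner (grad y) h)) (at y)"
    and desc: "\<And>x y. f y \<le> f x + inner (grad x) (y - x) + K / 2 * (norm (y - x))\<^sup>2"
    and K: "K \<ge> 0"
  shows "(norm (grad y - grad x))\<^sup>2 / 2 \<le> K * (f y - f x - inner (grad x) (y - x))"
proof -
  define g where "g = grad y - grad x"
  define N where "N = (norm g)\<^sup>2"
  define E where "E = f y - f x - inner (grad x) (y - x)"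
  have key: "\<tau> * N - K * \<tau>\<^sup>2 * N / 2 \<le> E" for \<tau>
  proof -
    define z where "z = y - \<tau> *\<^sub>R g"
    have 1: "f x + inner (grad x) (z - x) \<le> f z" by (rule grad_ineq[OF cvx df])
    have 2: "f z \<le> f y + inner (grad y) (z - y) + K / 2 * (norm (z - y))\<^sup>2" by (rule desc)
    have "z - x = (y - x) - \<tau> *\<^sub>R g" unfolding z_def by simp
    hence 3: "inner (grad x) (z - x) = inner (grad x) (y - x) - \<tau> * inner (grad x) g"
      by (simp add: inner_diff_right)
    have 4: "inner (grad y) (z - y) = - \<tau> * inner (grad y) g" unfolding z_def by (simp add: inner_diff_right)
    have 5: "(norm (z - y))\<^sup>2 = \<tau>\<^sup>2 * N" unfolding z_def N_def by (simp add: power_mult_distrib)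
    have 6: "inner (grad y) g - inner (grad x) g = N" unfolding N_def g_def
      by (simp add: power2_norm_eq_inner inner_diff_left)
    have 7: "\<tau> * inner (grad y) g - \<tau> * inner (grad x) g = \<tau> * N" using 6 by (simp add: algebra_simps)
    show ?thesis using 1 2 3 4 5 7 unfolding E_def by (simp add: algebra_simps)
  qed
  have N0: "N \<ge> 0" unfolding N_def by simp
  show ?thesis
  proof (cases "K = 0")
    case True
    have "N = 0"
    proof (rule ccontr)
      assume "N \<noteq> 0" hence Np: "N > 0" using N0 by simp
      have "((\<bar>E\<bar> + 1) / N) * N \<le> E" using key[of "(\<bar>E\<bar> + 1) / N"] True by simp
      hence "\<bar>E\<bar> + 1 \<le> E" using Np by simp
      thus False by simp
    qed
    thus ?thesis unfolding N_def g_def E_def using True by simp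
  next
    case False
    hence Kp: "K > 0" using K by simp
    have "(1/K) * N - K * (1/K)\<^sup>2 * N / 2 \<le> E" by (rule key)
    moreover have "(1/K) * N - K * (1/K)\<^sup>2 * N / 2 = N / (2 * K)" using Kp by (simp add: field_simps power2_eq_square)
    ultimately have "N / (2 * K) \<le> E" by simp
    hence "N / 2 \<le> K * E" using Kp by (simp add: field_simps)
    thus ?thesis unfolding N_def g_def E_def .
  qed
qed

lemma cocoer:
  fixes f :: "'a::real_inner \<Rightarrow> real"
  assumes cvx: "convex_on UNIV f" and df: "\<And>y. (f has_derivative (\<lambda>h. inner (grad y) h)) (at y)"
    and desc: "\<And>x y. f y \<le> f x + inner (grad x) (y - x) + K / 2 * (norm (y - x))\<^sup>2"
    and K: "K \<ge> 0"
  shows "(norm (grad y - grad x))\<^sup>2 \<le> K * inner (grad y - grad x) (y - x)"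
proof -
  have a: "(norm (grad y - grad x))\<^sup>2 / 2 \<le> K * (f y - f x - inner (grad x) (y - x))"
    by (rule cocoer_half[OF cvx df desc K])
  have b: "(norm (grad x - grad y))\<^sup>2 / 2 \<le> K * (f x - f y - inner (grad y) (x - y))"
    by (rule cocoer_half[OF cvx df desc K])
  have c: "(norm (grad x - grad y))\<^sup>2 = (norm (grad y - grad x))\<^sup>2" by (simp add: norm_minus_commute)
  have "K * (f y - f x - inner (grad x) (y - x)) + K * (f x - f y - inner (grad y) (x - y))
        = K * inner (grad y - grad x) (y - x)"
    by (simp add: algebra_simps inner_diff_left inner_diff_right inner_commute)
  with a b c show ?thesis by linarith
qed

lemma gradstep_nonexp:
  fixes f :: "'a::real_inner \<Rightarrow> real"
  assumes cvx: "convex_on UNIV f" and df: "\<And>y. (f has_derivative (\<lambda>h. inner (grad y) h)) (at y)"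
    and lip: "\<And>y z. norm (grad y - grad z) \<le> L * norm (y - z)"
    and L: "L > 0" and t: "0 < t" "t \<le> 1 / L"
  shows "norm ((x - t *\<^sub>R grad x) - (y - t *\<^sub>R grad y)) \<le> norm (x - y)"
proof -
  define g where "g = grad x - grad y"
  define h where "h = x - y"
  have co: "(norm g)\<^sup>2 \<le> L * inner g h" unfolding g_def h_def
    by (rule cocoer[OF cvx df descent[OF df lip]]) (use L in simp)
  have "0 \<le> L * inner g h" using co by (meson order_trans zero_le_power2)
  hence gh0: "inner g h \<ge> 0" using L by (simp add: zero_le_mult_iff)
  have tL: "t * L \<le> 1" using t L by (simp add: field_simps)
  have "t * (norm g)\<^sup>2 \<le> t * (L * inner g h)" using co t by simp
  also have "\<dots> = (t * L) * inner g h" by simp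
  also have "\<dots> \<le> 1 * inner g h" using tL gh0 by (intro mult_right_mono) auto
  finally have tn: "t * (norm g)\<^sup>2 \<le> inner g h" by simp
  have eq: "(x - t *\<^sub>R grad x) - (y - t *\<^sub>R grad y) = h + (- t) *\<^sub>R g"
    unfolding g_def h_def by (simp add: algebra_simps)
  have "(norm (h + (- t) *\<^sub>R g))\<^sup>2 = (norm h)\<^sup>2 + 2 * (- t) * inner h g + (- t) * (- t) * (norm g)\<^sup>2"
    by (simp add: power2_norm_eq_inner inner_add_left inner_add_right inner_commute algebra_simps)
  also have "\<dots> = (norm h)\<^sup>2 - t * (2 * inner g h - t * (norm g)\<^sup>2)"
    by (simp add: inner_commute algebra_simps)
  also have "\<dots> \<le> (norm h)\<^sup>2"
  proof -
    have "2 * inner g h - t * (norm g)\<^sup>2 \<ge> 0" using tn gh0 by linarith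
    thus ?thesis using t by simp
  qed
  finally have "(norm (h + (- t) *\<^sub>R g))\<^sup>2 \<le> (norm h)\<^sup>2" .
  hence "norm (h + (- t) *\<^sub>R g) \<le> norm h" using power2_le_imp_le by fastforce
  thus ?thesis unfolding eq h_def .
qed


lemma norm_convex_comb_sq:
  fixes x y :: "'a::real_inner"
  shows "(norm ((1 - t) *\<^sub>R x + t *\<^sub>R y))\<^sup>2 = (1 - t) * (norm x)\<^sup>2 + t * (norm y)\<^sup>2 - (1 - t) * t * (norm (x - y))\<^sup>2"
  by (simp add: power2_norm_eq_inner inner_add_left inner_add_right inner_diff_left inner_diff_right inner_commute algebra_simps)

lemma sq_descent_id:
  fixes x y :: "'a::real_inner"
  shows "(norm y)\<^sup>2 - (norm x)\<^sup>2 - 2 * inner x (y - x) = (norm (y - x))\<^sup>2"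
  by (simp add: power2_norm_eq_inner inner_diff_left inner_diff_right inner_commute algebra_simps)

lemma nesterov:
  fixes \<omega> :: "'a::euclidean_space \<Rightarrow> real"
  assumes sc: "strongly_convex_on \<mu> \<omega>"
    and d\<omega>: "\<And>y. (\<omega> has_derivative (\<lambda>h. inner (g\<omega> y) h)) (at y)"
    and lip: "\<And>y z. norm (g\<omega> y - g\<omega> z) \<le> L * norm (y - z)"
  shows "(L + \<mu>) * inner (g\<omega> y - g\<omega> x) (y - x) \<ge> (norm (g\<omega> y - g\<omega> x))\<^sup>2 + L * \<mu> * (norm (y - x))\<^sup>2"
proof -
  define \<phi> where "\<phi> = (\<lambda>z. \<omega> z - \<mu> / 2 * (norm z)\<^sup>2)"
  define g\<phi> where "g\<phi> = (\<lambda>z. g\<omega> z - \<mu> *\<^sub>R z)"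
  have cvx: "convex_on UNIV \<phi>"
  proof (rule convex_onI)
    fix t :: real and a b :: 'a assume t: "0 < t" "t < 1"
    have W: "\<omega> ((1 - t) *\<^sub>R a + t *\<^sub>R b) \<le> (1 - t) * \<omega> a + t * \<omega> b
        - \<mu> / 2 * (1 - t) * t * (norm (a - b))\<^sup>2"
      using sc[unfolded strongly_convex_on_def, rule_format, of "1 - t" a b] t by simp
    have e1: "\<mu> / 2 * ((1 - t) * (norm a)\<^sup>2 + t * (norm b)\<^sup>2 - (1 - t) * t * (norm (a - b))\<^sup>2)
       = (1 - t) * (\<mu> / 2 * (norm a)\<^sup>2) + t * (\<mu> / 2 * (norm b)\<^sup>2) - \<mu> / 2 * (1 - t) * t * (norm (a - b))\<^sup>2"
      by (simp add: field_simps)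
    have e2: "(1 - t) * (\<omega> a - \<mu> / 2 * (norm a)\<^sup>2) = (1 - t) * \<omega> a - (1 - t) * (\<mu> / 2 * (norm a)\<^sup>2)"
      by (simp add: algebra_simps)
    have e3: "t * (\<omega> b - \<mu> / 2 * (norm b)\<^sup>2) = t * \<omega> b - t * (\<mu> / 2 * (norm b)\<^sup>2)"
      by (simp add: algebra_simps)
    have "\<omega> ((1 - t) *\<^sub>R a + t *\<^sub>R b) - \<mu> / 2 * ((1 - t) * (norm a)\<^sup>2 + t * (norm b)\<^sup>2 - (1 - t) * t * (norm (a - b))\<^sup>2)
       \<le> (1 - t) * (\<omega> a - \<mu> / 2 * (norm a)\<^sup>2) + t * (\<omega> b - \<mu> / 2 * (norm b)\<^sup>2)"
      using W unfolding e1 e2 e3 by linarith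
    thus "\<phi> ((1 - t) *\<^sub>R a + t *\<^sub>R b) \<le> (1 - t) * \<phi> a + t * \<phi> b"
      unfolding \<phi>_def norm_convex_comb_sq .
  qed simp
  have d\<phi>: "(\<phi> has_derivative (\<lambda>h. inner (g\<phi> z) h)) (at z)" for z
  proof -
    have "((\<lambda>z. \<omega> z - \<mu> / 2 * inner z z) has_derivative (\<lambda>h. inner (g\<omega> z) h - \<mu> / 2 * (inner h z + inner z h))) (at z)"
      by (auto intro!: derivative_eq_intros d\<omega>)
    moreover have "(\<lambda>z. \<omega> z - \<mu> / 2 * inner z z) = \<phi>" unfolding \<phi>_def by (simp add: power2_norm_eq_inner)
    moreover have "(\<lambda>h. inner (g\<omega> z) h - \<mu> / 2 * (inner h z + inner z h)) = (\<lambda>h. inner (g\<phi> z) h)"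
      unfolding g\<phi>_def by (auto simp: inner_diff_left inner_commute algebra_simps)
    ultimately show ?thesis by simp
  qed
  have desc: "\<phi> b \<le> \<phi> a + inner (g\<phi> a) (b - a) + (L - \<mu>) / 2 * (norm (b - a))\<^sup>2" for a b
  proof -
    have "\<omega> b \<le> \<omega> a + inner (g\<omega> a) (b - a) + L / 2 * (norm (b - a))\<^sup>2" by (rule descent[OF d\<omega> lip])
    moreover have "\<mu> / 2 * ((norm b)\<^sup>2 - (norm a)\<^sup>2 - 2 * inner a (b - a)) = \<mu> / 2 * (norm (b - a))\<^sup>2"
      using sq_descent_id[of b a] by simp
    moreover have "\<mu> / 2 * ((norm b)\<^sup>2 - (norm a)\<^sup>2 - 2 * inner a (b - a))
       = \<mu> / 2 * (norm b)\<^sup>2 - \<mu> / 2 * (norm a)\<^sup>2 - \<mu> * inner a (b - a)"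
      by (simp add: field_simps)
    moreover have "inner (g\<phi> a) (b - a) = inner (g\<omega> a) (b - a) - \<mu> * inner a (b - a)"
      unfolding g\<phi>_def by (simp add: inner_diff_left)
    moreover have "(L - \<mu>) / 2 * (norm (b - a))\<^sup>2 = L / 2 * (norm (b - a))\<^sup>2 - \<mu> / 2 * (norm (b - a))\<^sup>2"
      by (simp add: field_simps)
    ultimately have "\<omega> b - \<mu> / 2 * (norm b)\<^sup>2 \<le> \<omega> a - \<mu> / 2 * (norm a)\<^sup>2 + inner (g\<phi> a) (b - a) + (L - \<mu>) / 2 * (norm (b - a))\<^sup>2"
      by linarith
    thus ?thesis unfolding \<phi>_def .
  qed
  have L\<mu>: "L - \<mu> \<ge> 0"
  proof -
    obtain b :: 'a where b: "b \<in> Basis" using nonempty_Basis by blast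
    have "\<phi> 0 + inner (g\<phi> 0) (b - 0) \<le> \<phi> b" by (rule grad_ineq[OF cvx d\<phi>])
    moreover have "\<phi> b \<le> \<phi> 0 + inner (g\<phi> 0) (b - 0) + (L - \<mu>) / 2 * (norm (b - 0))\<^sup>2" by (rule desc)
    ultimately have "0 \<le> (L - \<mu>) / 2 * (norm b)\<^sup>2" by simp
    moreover have "norm b = 1" using b by simp
    ultimately show ?thesis by simp
  qed
  have co: "(norm (g\<phi> y - g\<phi> x))\<^sup>2 \<le> (L - \<mu>) * inner (g\<phi> y - g\<phi> x) (y - x)"
    by (rule cocoer[OF cvx d\<phi> desc L\<mu>])
  define g where "g = g\<omega> y - g\<omega> x"
  define h where "h = y - x"
  have e1: "g\<phi> y - g\<phi> x = g - \<mu> *\<^sub>R h" unfolding g\<phi>_def g_def h_def by (simp add: algebra_simps)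
  have e2: "(norm (g - \<mu> *\<^sub>R h))\<^sup>2 = (norm g)\<^sup>2 - 2 * \<mu> * inner g h + \<mu> * \<mu> * (norm h)\<^sup>2"
    by (simp add: power2_norm_eq_inner inner_diff_left inner_diff_right inner_commute algebra_simps)
  have e3: "inner (g - \<mu> *\<^sub>R h) h = inner g h - \<mu> * (norm h)\<^sup>2"
    by (simp add: power2_norm_eq_inner inner_diff_left)
  from co have "(norm g)\<^sup>2 - 2 * \<mu> * inner g h + \<mu> * \<mu> * (norm h)\<^sup>2 \<le> (L - \<mu>) * (inner g h - \<mu> * (norm h)\<^sup>2)"
    unfolding e1 e2 e3 h_def[symmetric] .
  moreover have "(L + \<mu>) * inner g h - ((norm g)\<^sup>2 + L * \<mu> * (norm h)\<^sup>2)
     = (L - \<mu>) * (inner g h - \<mu> * (norm h)\<^sup>2) - ((norm g)\<^sup>2 - 2 * \<mu> * inner g h + \<mu> * \<mu> * (norm h)\<^sup>2)"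
    by (simp add: algebra_simps)
  ultimately show ?thesis unfolding g_def h_def by linarith
qed

lemma S_contraction:
  fixes \<omega> :: "'a::euclidean_space \<Rightarrow> real"
  assumes sc: "strongly_convex_on \<mu> \<omega>"
    and d\<omega>: "\<And>y. (\<omega> has_derivative (\<lambda>h. inner (g\<omega> y) h)) (at y)"
    and lip: "\<And>y z. norm (g\<omega> y - g\<omega> z) \<le> L * norm (y - z)"
    and \<mu>: "\<mu> > 0" and L: "L > 0" and u: "0 < u" "u \<le> 2 / (L + \<mu>)"
  shows "norm ((x - u *\<^sub>R g\<omega> x) - (y - u *\<^sub>R g\<omega> y)) \<le> sqrt (1 - 2 * u * \<mu> * L / (\<mu> + L)) * norm (x - y)"
proof -
  define g where "g = g\<omega> x - g\<omega> y"
  define h where "h = x - y"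
  define M where "M = \<mu> + L"
  define A where "A = inner g h"
  define Gn where "Gn = (norm g)\<^sup>2"
  define Hn where "Hn = (norm h)\<^sup>2"
  have M: "M > 0" unfolding M_def using \<mu> L by simp
  have nes: "M * A \<ge> Gn + L * \<mu> * Hn"
    using nesterov[OF sc d\<omega> lip, of x y] unfolding M_def A_def Gn_def Hn_def g_def h_def
    by (simp add: add.commute)
  have uM: "u * M \<le> 2" using u M unfolding M_def by (simp add: field_simps add.commute)
  have eq: "(x - u *\<^sub>R g\<omega> x) - (y - u *\<^sub>R g\<omega> y) = h - u *\<^sub>R g" unfolding g_def h_def by (simp add: algebra_simps)
  have sq: "(norm (h - u *\<^sub>R g))\<^sup>2 = Hn - 2 * u * A + u * u * Gn"
    unfolding Hn_def A_def Gn_def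
    by (simp add: power2_norm_eq_inner inner_diff_left inner_diff_right inner_commute algebra_simps)
  have "M * (Hn - 2 * u * A + u * u * Gn) = M * Hn - 2 * u * (M * A) + u * Gn * (u * M)"
    by (simp add: algebra_simps)
  also have "\<dots> \<le> M * Hn - 2 * u * (Gn + L * \<mu> * Hn) + u * Gn * 2"
  proof -
    have "2 * u * (Gn + L * \<mu> * Hn) \<le> 2 * u * (M * A)" using nes u by simp
    moreover have "u * Gn * (u * M) \<le> u * Gn * 2" using uM u unfolding Gn_def by (intro mult_left_mono) auto
    ultimately show ?thesis by linarith
  qed
  also have "\<dots> = M * ((1 - 2 * u * \<mu> * L / M) * Hn)" using M by (simp add: field_simps)
  finally have "(norm (h - u *\<^sub>R g))\<^sup>2 \<le> (1 - 2 * u * \<mu> * L / M) * Hn"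
    unfolding sq using M by (simp add: mult_le_cancel_left_pos)
  hence "sqrt ((norm (h - u *\<^sub>R g))\<^sup>2) \<le> sqrt ((1 - 2 * u * \<mu> * L / M) * Hn)"
    by (rule real_sqrt_le_mono)
  thus ?thesis unfolding eq Hn_def M_def h_def real_sqrt_mult by simp
qed


lemma step_identity:
  fixes sa sb ta tb wa wb z :: "'a::real_vector"
  shows "(a' *\<^sub>R sb + b' *\<^sub>R tb + (1 - a' - b') *\<^sub>R wb) - (a *\<^sub>R sa + b *\<^sub>R ta + (1 - a - b) *\<^sub>R wa)
    = a' *\<^sub>R (sb - sa) + b' *\<^sub>R (tb - ta) + (1 - a' - b') *\<^sub>R (wb - wa)
      + (a' - a) *\<^sub>R (sa - z) + (b' - b) *\<^sub>R (ta - z) + ((1 - a' - b') - (1 - a - b)) *\<^sub>R (wa - z)"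
  by (simp add: algebra_simps)

lemma norm6:
  fixes a b c d e f :: "'a::real_normed_vector"
  shows "norm (a + b + c + d + e + f) \<le> norm a + norm b + norm c + norm d + norm e + norm f"
  using norm_triangle_ineq[of "a+b+c+d+e" f] norm_triangle_ineq[of "a+b+c+d" e]
    norm_triangle_ineq[of "a+b+c" d] norm_triangle_ineq[of "a+b" c] norm_triangle_ineq[of a b]
  by linarith

lemma step_bound:
  fixes sa sb ta tb wa wb z xa xb :: "'a::real_normed_vector"
  assumes xa: "xa = a *\<^sub>R sa + ((1 - a) * a) *\<^sub>R ta + ((1 - a)\<^sup>2) *\<^sub>R wa"
    and xb: "xb = a' *\<^sub>R sb + ((1 - a') * a') *\<^sub>R tb + ((1 - a')\<^sup>2) *\<^sub>R wb"
    and s: "norm (sb - sa) \<le> r * D" and t: "norm (tb - ta) \<le> D" and w: "norm (wb - wa) \<le> D"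
    and bs: "norm (sa - z) \<le> CS" and bt: "norm (ta - z) \<le> CT" and bw: "norm (wa - z) \<le> CW"
    and a: "0 \<le> a" "a \<le> 1" and a': "0 \<le> a'" "a' \<le> 1"
  shows "norm (xb - xa) \<le> (1 - a' * (1 - r)) * D + \<bar>a' - a\<bar> * (CS + CT + 2 * CW)"
proof -
  define b where "b = (1 - a) * a"
  define b' where "b' = (1 - a') * a'"
  have g: "(1 - a)\<^sup>2 = 1 - a - b" unfolding b_def by (simp add: power2_eq_square algebra_simps)
  have g': "(1 - a')\<^sup>2 = 1 - a' - b'" unfolding b'_def by (simp add: power2_eq_square algebra_simps)
  have CS: "CS \<ge> 0" using bs norm_ge_zero order_trans by blast
  have CT: "CT \<ge> 0" using bt norm_ge_zero order_trans by blast
  have CW: "CW \<ge> 0" using bw norm_ge_zero order_trans by blast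
  have D: "D \<ge> 0" using t norm_ge_zero order_trans by blast
  have eq: "xb - xa = a' *\<^sub>R (sb - sa) + b' *\<^sub>R (tb - ta) + (1 - a' - b') *\<^sub>R (wb - wa)
      + (a' - a) *\<^sub>R (sa - z) + (b' - b) *\<^sub>R (ta - z) + ((1 - a' - b') - (1 - a - b)) *\<^sub>R (wa - z)"
    unfolding xa xb g g' b_def[symmetric] b'_def[symmetric] by (rule step_identity)
  have b'0: "b' \<ge> 0" unfolding b'_def using a' by simp
  have g'0: "1 - a' - b' \<ge> 0" using g' by (metis zero_le_power2)
  have db: "\<bar>b' - b\<bar> \<le> \<bar>a' - a\<bar>"
  proof -
    have "b' - b = (a' - a) * (1 - a - a')" unfolding b_def b'_def by (simp add: algebra_simps)
    moreover have "\<bar>1 - a - a'\<bar> \<le> 1" using a a' by simp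
    ultimately show ?thesis by (simp add: abs_mult mult_left_le)
  qed
  have dg: "\<bar>(1 - a' - b') - (1 - a - b)\<bar> \<le> 2 * \<bar>a' - a\<bar>"
  proof -
    have "(1 - a' - b') - (1 - a - b) = (a - a') * (2 - a - a')"
      unfolding b_def b'_def by (simp add: algebra_simps)
    moreover have "\<bar>2 - a - a'\<bar> \<le> 2" using a a' by simp
    ultimately have "\<bar>(1 - a' - b') - (1 - a - b)\<bar> \<le> \<bar>a - a'\<bar> * 2"
      by (simp add: abs_mult mult_left_mono)
    thus ?thesis by (simp add: abs_minus_commute)
  qed
  have "norm (xb - xa) \<le> norm (a' *\<^sub>R (sb - sa)) + norm (b' *\<^sub>R (tb - ta)) + norm ((1 - a' - b') *\<^sub>R (wb - wa))
      + norm ((a' - a) *\<^sub>R (sa - z)) + norm ((b' - b) *\<^sub>R (ta - z)) + norm (((1 - a' - b') - (1 - a - b)) *\<^sub>R (wa - z))"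
    unfolding eq by (rule norm6)
  also have "\<dots> \<le> a' * (r * D) + b' * D + (1 - a' - b') * D + \<bar>a' - a\<bar> * CS + \<bar>a' - a\<bar> * CT + (2 * \<bar>a' - a\<bar>) * CW"
  proof -
    have "norm (a' *\<^sub>R (sb - sa)) \<le> a' * (r * D)" using a' s by (simp add: mult_left_mono)
    moreover have "norm (b' *\<^sub>R (tb - ta)) \<le> b' * D" using b'0 t by (simp add: mult_left_mono)
    moreover have "norm ((1 - a' - b') *\<^sub>R (wb - wa)) \<le> (1 - a' - b') * D" using g'0 w by (simp add: mult_left_mono)
    moreover have "norm ((a' - a) *\<^sub>R (sa - z)) \<le> \<bar>a' - a\<bar> * CS" using bs by (simp add: mult_left_mono)
    moreover have "norm ((b' - b) *\<^sub>R (ta - z)) \<le> \<bar>a' - a\<bar> * CT" using bt db CT by (simp add: mult_mono)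
    moreover have "norm (((1 - a' - b') - (1 - a - b)) *\<^sub>R (wa - z)) \<le> (2 * \<bar>a' - a\<bar>) * CW" using bw dg CW by (simp add: mult_mono)
    ultimately show ?thesis by linarith
  qed
  also have "\<dots> = (1 - a' * (1 - r)) * D + \<bar>a' - a\<bar> * (CS + CT + 2 * CW)"
    by (simp add: algebra_simps)
  finally show ?thesis .
qed

lemma arith_step:
  fixes c k J C B d D' e :: real
  assumes c: "c > 0" and k: "k \<ge> 2" and J: "J \<ge> 2" and CB: "C \<ge> B" "B \<ge> 0"
    and d: "d \<le> C * J / (c * k)" and e: "e \<le> 2 / (c * k * (k + 1))" "e \<ge> 0"
    and D': "D' \<le> (1 - 2 / (k + 1)) * d + e * B"
  shows "D' \<le> C * J / (c * (k + 1))"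
proof -
  have k1: "1 - 2 / (k + 1) \<ge> 0" using k by (simp add: field_simps)
  have "(1 - 2 / (k + 1)) * d \<le> (1 - 2 / (k + 1)) * (C * J / (c * k))" using k1 d by (rule mult_left_mono[rotated])
  moreover have "e * B \<le> (2 / (c * k * (k + 1))) * B" using e CB by (intro mult_right_mono) auto
  moreover have "(2 / (c * k * (k + 1))) * B \<le> (2 / (c * k * (k + 1))) * (C * J / 2)"
  proof -
    have "B \<le> C" using CB by simp
    moreover have "2 * C \<le> J * C" using J CB by (intro mult_right_mono) auto
    ultimately have "2 * B \<le> C * J" by (simp add: mult.commute)
    moreover have "2 / (c * k * (k + 1)) \<ge> 0" using c k by simp
    ultimately show ?thesis by (intro mult_left_mono) auto
  qed
  moreover have "(1 - 2 / (k + 1)) * (C * J / (c * k)) + (2 / (c * k * (k + 1))) * (C * J / 2) = C * J / (c * (k + 1))"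
  proof -
    define Q where "Q = C * J"
    have k0: "k \<noteq> 0" "k + 1 \<noteq> 0" "c \<noteq> 0" using c k by auto
    have e1: "1 - 2/(k+1) = (k-1)/(k+1)" using k0 by (simp add: field_simps)
    have e2: "(k-1)/(k+1) * (Q/(c*k)) = (k-1)*Q/(c*k*(k+1))" by (simp add: mult.commute mult.left_commute)
    have e3: "2/(c*k*(k+1)) * (Q/2) = Q/(c*k*(k+1))" by simp
    have e4: "(k-1)*Q/(c*k*(k+1)) + Q/(c*k*(k+1)) = (k*Q)/(c*k*(k+1))"
      by (simp add: add_divide_distrib[symmetric] algebra_simps)
    have e5: "(k*Q)/(c*k*(k+1)) = Q/(c*(k+1))" using k0 by simp
    show ?thesis unfolding Q_def[symmetric] e1 e2 e3 e4 e5 ..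
  qed
  ultimately show ?thesis using D' by linarith
qed

theorem mainTheorem15:
  fixes f1 f2 \<omega> :: "real ^ 'n \<Rightarrow> real"
    and grad_f1 grad_f2 grad_\<omega> :: "real ^ 'n \<Rightarrow> real ^ 'n"
    and g1 g2 :: "real ^ 'n \<Rightarrow> ereal"
    and L1 L2 L\<omega> \<mu> u t s :: real
    and x :: "nat \<Rightarrow> real ^ 'n"
    and xbar :: "real ^ 'n"
    and C_x C_S C_T :: real
  assumes f1_cvx: "convex_on UNIV f1" and f2_cvx: "convex_on UNIV f2"
    and f1_grad: "\<And>y. (f1 has_derivative (\<lambda>h. grad_f1 y \<bullet> h)) (at y)"
    and f2_grad: "\<And>y. (f2 has_derivative (\<lambda>h. grad_f2 y \<bullet> h)) (at y)"
    and L1_pos: "L1 > 0" and L2_pos: "L2 > 0"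
    and f1_lip: "\<And>y z. norm (grad_f1 y - grad_f1 z) \<le> L1 * norm (y - z)"
    and f2_lip: "\<And>y z. norm (grad_f2 y - grad_f2 z) \<le> L2 * norm (y - z)"
    and g1_prop: "proper_fun g1" and g1_lsc: "lsc_fun g1" and g1_cvx: "convex_efun g1"
    and g2_prop: "proper_fun g2" and g2_lsc: "lsc_fun g2" and g2_cvx: "convex_efun g2"
    and \<mu>_pos: "\<mu> > 0" and L\<omega>_pos: "L\<omega> > 0"
    and \<omega>_sc: "strongly_convex_on \<mu> \<omega>"
    and \<omega>_grad: "\<And>y. (\<omega> has_derivative (\<lambda>h. grad_\<omega> y \<bullet> h)) (at y)"
    and \<omega>_lip: "\<And>y z. norm (grad_\<omega> y - grad_\<omega> z) \<le> L\<omega> * norm (y - z)"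
    and u_range: "0 < u" "u \<le> 2 / (L\<omega> + \<mu>)"
    and t_range: "0 < t" "t \<le> 1 / L1"
    and s_range: "0 < s" "s \<le> 1 / L2"
    and argmin_ne: "\<exists>y. \<forall>z. ereal (f2 y) + g2 y \<le> ereal (f2 z) + g2 z"
    and r_lt1: "sqrt (1 - 2 * u * \<mu> * L\<omega> / (\<mu> + L\<omega>)) < 1"
    and iter: "\<And>k. k \<ge> 1 \<Longrightarrow>
      (let r = sqrt (1 - 2 * u * \<mu> * L\<omega> / (\<mu> + L\<omega>));
           \<alpha> = min (2 / ((1 - r) * real k)) 1;
           S = (\<lambda>y. y - u *\<^sub>R grad_\<omega> y);
           T = (\<lambda>y. prox (escale t g1) (y - t *\<^sub>R grad_f1 y));
           W = (\<lambda>y. prox (escale s g2) (y - s *\<^sub>R grad_f2 y))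
       in x k = \<alpha> *\<^sub>R S (x (k - 1)) + ((1 - \<alpha>) * \<alpha>) *\<^sub>R T (x (k - 1))
                 + ((1 - \<alpha>)\<^sup>2) *\<^sub>R W (x (k - 1)))"
    and xbar_fix: "prox (escale s g2) (xbar - s *\<^sub>R grad_f2 xbar) = xbar"
    and C_nonneg: "C_x \<ge> 0" "C_S \<ge> 0" "C_T \<ge> 0"
    and bd_x: "\<And>k. norm (x k - xbar) \<le> C_x"
    and bd_S: "\<And>k. norm ((x k - u *\<^sub>R grad_\<omega> (x k)) - xbar) \<le> C_S + C_x"
    and bd_T: "\<And>k. norm (prox (escale t g1) (x k - t *\<^sub>R grad_f1 (x k)) - xbar) \<le> C_T + C_x"
  shows "\<And>k. k \<ge> 1 \<Longrightarrow>
      (let r = sqrt (1 - 2 * u * \<mu> * L\<omega> / (\<mu> + L\<omega>));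
           J = real_of_int \<lfloor>2 / (1 - r)\<rfloor>;
           W = (\<lambda>y. prox (escale s g2) (y - s *\<^sub>R grad_f2 y));
           C = C_S + 2 * C_T + 5 * C_x
       in norm (x k - x (k - 1)) \<le> C * J / ((1 - r) * real k)
        \<and> norm (W (x (k - 1)) - x (k - 1)) \<le> C * (J + 2) / ((1 - r) * real k))"
proof -
  define r where "r = sqrt (1 - 2 * u * \<mu> * L\<omega> / (\<mu> + L\<omega>))"
  define c where "c = 1 - r"
  define M where "M = \<mu> + L\<omega>"
  have M: "M > 0" unfolding M_def using \<mu>_pos L\<omega>_pos by simp
  have uM: "u * M \<le> 2" using u_range M unfolding M_def by (simp add: field_simps add.commute)
  have rad: "2 * u * \<mu> * L\<omega> / (\<mu> + L\<omega>) \<le> 1"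
  proof -
    have sq: "4 * \<mu> * L\<omega> \<le> M * M"
    proof -
      have "0 \<le> (\<mu> - L\<omega>)\<^sup>2" by simp
      moreover have "M * M - 4 * \<mu> * L\<omega> = (\<mu> - L\<omega>)\<^sup>2" unfolding M_def by (simp add: power2_eq_square algebra_simps)
      ultimately show ?thesis by linarith
    qed
    have "2 * u * \<mu> * L\<omega> * M = (2 * \<mu> * L\<omega>) * (u * M)" by (simp add: algebra_simps)
    also have "\<dots> \<le> (2 * \<mu> * L\<omega>) * 2" using uM \<mu>_pos L\<omega>_pos by (intro mult_left_mono) auto
    also have "\<dots> \<le> M * M" using sq by simp
    finally have "2 * u * \<mu> * L\<omega> * M \<le> 1 * M * M" by simp
    hence "2 * u * \<mu> * L\<omega> \<le> M" using M by (simp add: mult_le_cancel_right)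
    thus ?thesis using M unfolding M_def by (simp add: field_simps)
  qed
  have r0: "r \<ge> 0" unfolding r_def using rad by simp
  have r1: "r < 1" unfolding r_def using r_lt1 .
  have c: "0 < c" "c \<le> 1" unfolding c_def using r0 r1 by auto
  define J where "J = real_of_int \<lfloor>2 / c\<rfloor>"
  define J' where "J' = nat \<lfloor>2 / c\<rfloor>"
  have twoc: "2 / c \<ge> 2" using c by (simp add: field_simps)
  have fl2: "\<lfloor>2 / c\<rfloor> \<ge> 2" using twoc by (simp add: le_floor_iff)
  have fl0: "(0::int) \<le> \<lfloor>2 / c\<rfloor>" using fl2 by linarith
  have JJ': "J = real J'" unfolding J_def J'_def using of_nat_nat[OF fl0] by metis
  have J2: "J \<ge> 2" unfolding J_def using twoc by (simp add: le_floor_iff)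
  have J'2: "J' \<ge> 2" using J2 JJ' by simp
  have Jle: "J \<le> 2 / c" unfolding J_def by simp
  have Jlt: "2 / c < J + 1" unfolding J_def by simp
  define \<alpha> where "\<alpha> = (\<lambda>k::nat. min (2 / (c * real k)) 1)"
  define S where "S = (\<lambda>y::real^'n. y - u *\<^sub>R grad_\<omega> y)"
  define T where "T = (\<lambda>y. prox (escale t g1) (y - t *\<^sub>R grad_f1 y))"
  define W where "W = (\<lambda>y. prox (escale s g2) (y - s *\<^sub>R grad_f2 y))"
  define C where "C = C_S + 2 * C_T + 5 * C_x"
  define B where "B = C_S + C_T + 4 * C_x"
  have C0: "C \<ge> B" "B \<ge> 0" unfolding C_def B_def using C_nonneg by auto
  have it: "x k = \<alpha> k *\<^sub>R S (x (k - 1)) + ((1 - \<alpha> k) * \<alpha> k) *\<^sub>R T (x (k - 1))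
                 + ((1 - \<alpha> k)\<^sup>2) *\<^sub>R W (x (k - 1))" if "k \<ge> 1" for k
    using iter[OF that] unfolding Let_def \<alpha>_def S_def T_def W_def c_def r_def .
  have Sc: "norm (S a - S b) \<le> r * norm (a - b)" for a b
    unfolding S_def r_def
    using S_contraction[OF \<omega>_sc \<omega>_grad \<omega>_lip \<mu>_pos L\<omega>_pos u_range, of a b] by simp
  have Tn: "norm (T a - T b) \<le> norm (a - b)" for a b
  proof -
    have "norm (T a - T b) \<le> norm ((a - t *\<^sub>R grad_f1 a) - (b - t *\<^sub>R grad_f1 b))"
      unfolding T_def by (rule prox_nonexp[OF escale_props[OF t_range(1) g1_prop g1_lsc g1_cvx]])
    also have "\<dots> \<le> norm (a - b)" by (rule gradstep_nonexp[OF f1_cvx f1_grad f1_lip L1_pos t_range])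
    finally show ?thesis .
  qed
  have Wn: "norm (W a - W b) \<le> norm (a - b)" for a b
  proof -
    have "norm (W a - W b) \<le> norm ((a - s *\<^sub>R grad_f2 a) - (b - s *\<^sub>R grad_f2 b))"
      unfolding W_def by (rule prox_nonexp[OF escale_props[OF s_range(1) g2_prop g2_lsc g2_cvx]])
    also have "\<dots> \<le> norm (a - b)" by (rule gradstep_nonexp[OF f2_cvx f2_grad f2_lip L2_pos s_range])
    finally show ?thesis .
  qed
  have bW: "norm (W (x k) - xbar) \<le> C_x" for k
  proof -
    have "W xbar = xbar" unfolding W_def by (rule xbar_fix)
    hence "norm (W (x k) - xbar) = norm (W (x k) - W xbar)" by simp
    also have "\<dots> \<le> norm (x k - xbar)" by (rule Wn)
    also have "\<dots> \<le> C_x" by (rule bd_x)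
    finally show ?thesis .
  qed
  have bS: "norm (S (x k) - xbar) \<le> C_S + C_x" for k unfolding S_def by (rule bd_S)
  have bT: "norm (T (x k) - xbar) \<le> C_T + C_x" for k unfolding T_def by (rule bd_T)
  have \<alpha>01: "0 \<le> \<alpha> k" "\<alpha> k \<le> 1" for k unfolding \<alpha>_def using c by auto
  have \<alpha>le: "\<alpha> k \<le> 2 / (c * real k)" for k unfolding \<alpha>_def by simp
  have \<alpha>big: "\<alpha> k = 2 / (c * real k)" if "real k > 2 / c" for k
  proof -
    have "c * real k > 2" using that c by (simp add: field_simps)
    hence "2 / (c * real k) < 1" by simp
    thus ?thesis unfolding \<alpha>_def by simp
  qed
  define d where "d = (\<lambda>k. norm (x k - x (k - 1)))"
  have small: "d k \<le> C * J / (c * real k)" if k: "1 \<le> k" "k \<le> J'" for k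
  proof -
    have "d k \<le> norm (x k - xbar) + norm (x (k - 1) - xbar)" unfolding d_def
      using norm_triangle_ineq4[of "x k - xbar" "x (k - 1) - xbar"] by simp
    also have "\<dots> \<le> 2 * C_x" using bd_x[of k] bd_x[of "k - 1"] by simp
    also have "\<dots> \<le> C" unfolding C_def using C_nonneg by simp
    also have "\<dots> \<le> C * (J / (c * real k))"
    proof -
      have "c * real k \<le> 1 * real k" using c by (intro mult_right_mono) auto
      also have "\<dots> \<le> J" using k JJ' by simp
      finally have "c * real k \<le> J" .
      moreover have "c * real k > 0" using c k by simp
      ultimately have "1 \<le> J / (c * real k)" by simp
      moreover have "C \<ge> 0" using C0 by simp
      ultimately show ?thesis by (metis mult_left_mono mult.right_neutral)
    qed
    finally show ?thesis by simp
  qed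
  have rec: "d (J' + m) \<le> C * J / (c * real (J' + m))" for m
  proof (induction m)
    case 0
    show ?case using small[of J'] J'2 by simp
  next
    case (Suc m)
    define k where "k = J' + m"
    have k2: "k \<ge> 2" unfolding k_def using J'2 by simp
    have kJ: "real k \<ge> J" unfolding k_def JJ' by simp
    have k1big: "real (k + 1) > 2 / c" using kJ Jlt by simp
    have a': "\<alpha> (k + 1) = 2 / (c * real (k + 1))" by (rule \<alpha>big[OF k1big])
    have st: "norm (x (k + 1) - x k) \<le> (1 - \<alpha> (k + 1) * (1 - r)) * d k
              + \<bar>\<alpha> (k + 1) - \<alpha> k\<bar> * ((C_S + C_x) + (C_T + C_x) + 2 * C_x)"
    proof (rule step_bound)
      show "x k = \<alpha> k *\<^sub>R S (x (k - 1)) + ((1 - \<alpha> k) * \<alpha> k) *\<^sub>R T (x (k - 1))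
                 + ((1 - \<alpha> k)\<^sup>2) *\<^sub>R W (x (k - 1))" using it[of k] k2 by simp
      show "x (k + 1) = \<alpha> (k + 1) *\<^sub>R S (x k) + ((1 - \<alpha> (k + 1)) * \<alpha> (k + 1)) *\<^sub>R T (x k)
                 + ((1 - \<alpha> (k + 1))\<^sup>2) *\<^sub>R W (x k)" using it[of "k + 1"] by simp
      show "norm (S (x k) - S (x (k - 1))) \<le> r * d k" unfolding d_def by (rule Sc)
      show "norm (T (x k) - T (x (k - 1))) \<le> d k" unfolding d_def by (rule Tn)
      show "norm (W (x k) - W (x (k - 1))) \<le> d k" unfolding d_def by (rule Wn)
    qed (use bS bT bW \<alpha>01 in auto)
    have "\<alpha> (k + 1) * (1 - r) = 2 / (real k + 1)"
      unfolding a' c_def[symmetric] using c by simp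
    hence co: "1 - \<alpha> (k + 1) * (1 - r) = 1 - 2 / (real k + 1)" by simp
    have ea: "\<bar>\<alpha> (k + 1) - \<alpha> k\<bar> \<le> 2 / (c * real k * (real k + 1))"
    proof -
      have "\<alpha> (k + 1) \<le> \<alpha> k"
      proof -
        have ck: "c * real (k + 1) > 2" using k1big c by (simp add: field_simps)
        have "\<alpha> (k + 1) < 1" unfolding a' using ck by simp
        moreover have "\<alpha> (k + 1) \<le> 2 / (c * real k)" unfolding a' using c k2
          by (intro divide_left_mono) auto
        moreover have "\<alpha> k = min (2 / (c * real k)) 1" by (simp add: \<alpha>_def)
        ultimately show ?thesis by simp
      qed
      hence "\<bar>\<alpha> (k + 1) - \<alpha> k\<bar> = \<alpha> k - \<alpha> (k + 1)" by simp
      also have "\<dots> \<le> 2 / (c * real k) - 2 / (c * (real k + 1))" using \<alpha>le[of k] a' by (simp add: add.commute)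
      also have "\<dots> = 2 / (c * real k * (real k + 1))"
      proof -
        have nz: "c * real k \<noteq> 0" "c * (real k + 1) \<noteq> 0" "c * real k * (real k + 1) \<noteq> 0"
          using c k2 by auto
        show ?thesis using nz by (simp add: divide_simps)
      qed
      finally show ?thesis .
    qed
    have "d (k + 1) \<le> C * J / (c * (real k + 1))"
    proof (rule arith_step[OF c(1) _ J2 C0])
      show "real k \<ge> 2" using k2 by simp
      show "d k \<le> C * J / (c * real k)" using Suc.IH unfolding k_def by simp
      show "\<bar>\<alpha> (k + 1) - \<alpha> k\<bar> \<le> 2 / (c * real k * (real k + 1))" by (rule ea)
      show "\<bar>\<alpha> (k + 1) - \<alpha> k\<bar> \<ge> 0" by simp
      show "d (k + 1) \<le> (1 - 2 / (real k + 1)) * d k + \<bar>\<alpha> (k + 1) - \<alpha> k\<bar> * B"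
        using st unfolding co d_def B_def by (simp add: algebra_simps)
    qed
    thus ?case unfolding k_def by (simp add: add.commute)
  qed
  have A: "d k \<le> C * J / (c * real k)" if k: "k \<ge> 1" for k
  proof (cases "k \<le> J'")
    case True thus ?thesis using small k by simp
  next
    case False
    hence "k = J' + (k - J')" by simp
    thus ?thesis using rec[of "k - J'"] by metis
  qed
  have Bd: "norm (W (x (k - 1)) - x (k - 1)) \<le> C * (J + 2) / (c * real k)" if k: "k \<ge> 1" for k
  proof -
    define a where "a = \<alpha> k"
    define b where "b = (1 - a) * a"
    have g: "(1 - a)\<^sup>2 = 1 - a - b" unfolding b_def by (simp add: power2_eq_square algebra_simps)
    have a01: "0 \<le> a" "a \<le> 1" unfolding a_def using \<alpha>01 by auto
    have b0: "0 \<le> b" "b \<le> a" unfolding b_def using a01 by (auto simp: mult_left_le_one_le)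
    have "x k - W (x (k - 1)) = a *\<^sub>R (S (x (k - 1)) - W (x (k - 1))) + b *\<^sub>R (T (x (k - 1)) - W (x (k - 1)))"
      using it[OF k] unfolding a_def[symmetric] b_def[symmetric] g by (simp add: algebra_simps)
    hence "norm (x k - W (x (k - 1))) \<le> a * norm (S (x (k - 1)) - W (x (k - 1))) + b * norm (T (x (k - 1)) - W (x (k - 1)))"
      using a01 b0 by (simp add: norm_triangle_le)
    also have "\<dots> \<le> a * (C_S + 2 * C_x) + b * (C_T + 2 * C_x)"
    proof -
      have "norm (S (x (k - 1)) - W (x (k - 1))) \<le> C_S + 2 * C_x"
        using norm_triangle_ineq4[of "S (x (k - 1)) - xbar" "W (x (k - 1)) - xbar"] bS[of "k - 1"] bW[of "k - 1"] by simp
      moreover have "norm (T (x (k - 1)) - W (x (k - 1))) \<le> C_T + 2 * C_x"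
        using norm_triangle_ineq4[of "T (x (k - 1)) - xbar" "W (x (k - 1)) - xbar"] bT[of "k - 1"] bW[of "k - 1"] by simp
      ultimately show ?thesis using a01 b0 by (intro add_mono mult_left_mono) auto
    qed
    also have "\<dots> \<le> a * (C_S + 2 * C_x) + a * (C_T + 2 * C_x)"
      using b0 C_nonneg by (intro add_mono mult_right_mono) auto
    also have "\<dots> = a * B" unfolding B_def by (simp add: algebra_simps)
    also have "\<dots> \<le> (2 / (c * real k)) * C"
      using \<alpha>le[of k] a01 C0 c unfolding a_def[symmetric] by (intro mult_mono) auto
    finally have 1: "norm (x k - W (x (k - 1))) \<le> 2 * C / (c * real k)" by simp
    have "norm (W (x (k - 1)) - x (k - 1)) \<le> norm (x k - W (x (k - 1))) + d k"
      unfolding d_def using norm_triangle_ineq4[of "x k - W (x (k - 1))" "x k - x (k - 1)"] by (simp add: norm_minus_commute)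
    also have "\<dots> \<le> 2 * C / (c * real k) + C * J / (c * real k)" using 1 A[OF k] by simp
    also have "\<dots> = C * (J + 2) / (c * real k)" by (simp add: add_divide_distrib[symmetric] algebra_simps)
    finally show ?thesis .
  qed
  fix k :: nat assume k: "k \<ge> 1"
  show "let r = sqrt (1 - 2 * u * \<mu> * L\<omega> / (\<mu> + L\<omega>));
           J = real_of_int \<lfloor>2 / (1 - r)\<rfloor>;
           W = (\<lambda>y. prox (escale s g2) (y - s *\<^sub>R grad_f2 y));
           C = C_S + 2 * C_T + 5 * C_x
       in norm (x k - x (k - 1)) \<le> C * J / ((1 - r) * real k)
        \<and> norm (W (x (k - 1)) - x (k - 1)) \<le> C * (J + 2) / ((1 - r) * real k)"
    using A[OF k] Bd[OF k] unfolding Let_def r_def[symmetric] c_def[symmetric] J_def[symmetric]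
      W_def[symmetric] C_def[symmetric] d_def by simp
qed

end
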